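(* Let $T>0$ and let $\alpha,\beta:\mathbb{R}\to\mathbb{R}$ be continuous $T$-periodic functions such that $\alpha=0$ on $[\tfrac T2,T]$, $\beta=0$ on $[0,\tfrac T2]$, $\alpha>0$ on $(0,\tfrac T2)$, $\beta>0$ on $(\tfrac T2,T)$, and $\int_0^T\alpha=\int_0^T\beta=:A>0$. Consider the system $u'=\alpha(t)u(1-v)$, $v'=\beta(t)v(-1+u)$. Let $x>0$, let $(u,v)$ be the solution with $u(0)=v(0)=x$, and write $u_k:=u(kT)$, $v_k:=v(kT)$ for $k\ge0$. Fix $n\ge2$ and suppose \[ u_0+u_1+\cdots+u_{n-1}=n,\qquad v_0+v_1+\cdots+v_{n-1}=n . \] Then $u_h=v_{n-h}$ for all $h\in\{1,\ldots,n-1\}$.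
   Context: For $n\ge1$ the $nT$-Poincaré map is $\mathcal{P}_n(u_0,v_0)=(u(nT),v(nT))$ where $(u,v)$ solves the system with $(u(0),v(0))=(u_0,v_0)$. One has $u_n=u_0e^{(n-v_0-\cdots-v_{n-1})A}$ and $v_n=v_0e^{(u_1+\cdots+u_n-n)A}$, so the displayed sum conditions are equivalent to $nT$-periodicity of the solution. *)

theory Defs
  imports "HOL-Analysis.Analysis"
begin

end

theory Submission imports Defs begin

lemma zero_const:
  fixes f :: "real \<Rightarrow> real"
  assumes "\<And>t. t \<in> {a..b} \<Longrightarrow> (f has_real_derivative 0) (at t within {a..b})"
    and "t \<in> {a..b}"
  shows "f t = f a"
proof -
  obtain c where "\<forall>x\<in>{a..b}. f x = c"
    using has_field_derivative_zero_constant[of "{a..b}" f] assms(1) by auto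
  moreover have "a \<in> {a..b}" using assms(2) by auto
  ultimately show ?thesis using assms(2) by auto
qed

lemma expsol:
  fixes f g :: "real \<Rightarrow> real"
  assumes ab: "a \<le> b" and gc: "continuous_on {a..b} g"
    and d: "\<And>t. t \<in> {a..b} \<Longrightarrow> (f has_real_derivative (g t * f t * c)) (at t within {a..b})"
  shows "f b = f a * exp (c * integral {a..b} g)"
proof -
  define P where "P t = integral {a..t} g" for t
  have dP: "(P has_real_derivative g t) (at t within {a..b})" if "t \<in> {a..b}" for t
    using integral_has_vector_derivative[OF gc that] unfolding P_def
    by (simp add: has_real_derivative_iff_has_vector_derivative)
  define h where "h t = f t * exp (- c * P t)" for t
  have "(h has_real_derivative 0) (at t within {a..b})" if "t \<in> {a..b}" for t
  proof -
    have "(h has_real_derivative (g t * f t * c) * exp (- c * P t) + f t * (exp (- c * P t) * (- c * g t))) (at t within {a..b})"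
    proof -
      have e: "((\<lambda>t. exp (- c * P t)) has_real_derivative exp (- c * P t) * (- c * g t)) (at t within {a..b})"
        using DERIV_chain2[OF DERIV_exp DERIV_cmult[OF dP[OF that], of "-c"]] by simp
      show ?thesis unfolding h_def using DERIV_mult[OF d[OF that] e] by simp
    qed
    moreover have "(g t * f t * c) * exp (- c * P t) + f t * (exp (- c * P t) * (- c * g t)) = 0"
      by (simp add: algebra_simps)
    ultimately show ?thesis by simp
  qed
  then have "h b = h a" using zero_const[of a b h b] ab by auto
  moreover have "P a = 0" by (simp add: P_def)
  ultimately have "f b * exp (- c * P b) = f a" by (simp add: h_def)
  then have "f b = f a * exp (c * P b)"
    by (metis exp_minus_inverse mult.assoc mult.right_neutral mult_minus_left)
  then show ?thesis by (simp add: P_def)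
qed

theorem lemma3p1:
  fixes T A x :: real and \<alpha> \<beta> u v :: "real \<Rightarrow> real" and n :: nat
  assumes T: "T > 0"
    and cont_a: "continuous_on UNIV \<alpha>" and cont_b: "continuous_on UNIV \<beta>"
    and per_a: "\<forall>t. \<alpha> (t + T) = \<alpha> t" and per_b: "\<forall>t. \<beta> (t + T) = \<beta> t"
    and a0: "\<forall>t\<in>{T/2..T}. \<alpha> t = 0" and b0: "\<forall>t\<in>{0..T/2}. \<beta> t = 0"
    and apos: "\<forall>t\<in>{0<..<T/2}. \<alpha> t > 0" and bpos: "\<forall>t\<in>{T/2<..<T}. \<beta> t > 0"
    and intA: "integral {0..T} \<alpha> = A" and intB: "integral {0..T} \<beta> = A" and A: "A > 0"
    and x: "x > 0"
    and ode_u: "\<forall>t\<in>{0..}. (u has_real_derivative (\<alpha> t * u t * (1 - v t))) (at t within {0..})"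
    and ode_v: "\<forall>t\<in>{0..}. (v has_real_derivative (\<beta> t * v t * (-1 + u t))) (at t within {0..})"
    and init: "u 0 = x" "v 0 = x"
    and n: "n \<ge> 2"
    and sum_u: "(\<Sum>k<n. u (real k * T)) = real n"
    and sum_v: "(\<Sum>k<n. v (real k * T)) = real n"
  shows "\<forall>h\<in>{1..n-1}. u (real h * T) = v (real (n - h) * T)"
proof -
  have perA: "\<alpha> (t + real k * T) = \<alpha> t" for t k
  proof (induction k arbitrary: t)
    case (Suc k) then show ?case using per_a[rule_format, of "t + real k * T"] by (simp add: algebra_simps)
  qed simp
  have perB: "\<beta> (t + real k * T) = \<beta> t" for t k
  proof (induction k arbitrary: t)
    case (Suc k) then show ?case using per_b[rule_format, of "t + real k * T"] by (simp add: algebra_simps)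
  qed simp
  have intgA: "\<alpha> integrable_on {0..T}" "\<beta> integrable_on {0..T}"
    using integrable_continuous_real[OF continuous_on_subset[OF cont_a]]
      integrable_continuous_real[OF continuous_on_subset[OF cont_b]] by auto
  have iA2: "integral {T/2..T} \<alpha> = 0"
  proof -
    have "integral {T/2..T} \<alpha> = integral {T/2..T} (\<lambda>_. 0::real)" using a0 by (intro integral_cong) auto
    then show ?thesis by simp
  qed
  have iB1: "integral {0..T/2} \<beta> = 0"
  proof -
    have "integral {0..T/2} \<beta> = integral {0..T/2} (\<lambda>_. 0::real)" using b0 by (intro integral_cong) auto
    then show ?thesis by simp
  qed
  have iA1: "integral {0..T/2} \<alpha> = A"
    using Henstock_Kurzweil_Integration.integral_combine[where a=0 and c="T/2" and b=T and f="\<alpha>"] intgA T iA2 intA by simp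
  have iB2: "integral {T/2..T} \<beta> = A"
    using Henstock_Kurzweil_Integration.integral_combine[where a=0 and c="T/2" and b=T and f="\<beta>"] intgA T iB1 intB by simp
  have step: "u (real (Suc k) * T) = u (real k * T) * exp ((1 - v (real k * T)) * A) \<and>
     v (real (Suc k) * T) = v (real k * T) * exp ((-1 + u (real (Suc k) * T)) * A)" for k
  proof -
    define a where "a = real k * T"
    define m where "m = a + T/2"
    define b where "b = a + T"
    have a0': "a \<ge> 0" using T by (simp add: a_def)
    have bb: "real (Suc k) * T = b" by (simp add: b_def a_def algebra_simps)
    have am: "a \<le> m" and mb: "m \<le> b" using T by (auto simp: m_def b_def)
    have sub1: "{a..m} \<subseteq> {0..}" and sub2: "{m..b} \<subseteq> {0..}" using a0' am by auto
    have bz: "\<beta> t = 0" if "t \<in> {a..m}" for t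
      using perB[of "t - a" k] b0 that by (auto simp: a_def m_def)
    have az: "\<alpha> t = 0" if "t \<in> {m..b}" for t
      using perA[of "t - a" k] a0 that by (auto simp: a_def m_def b_def)
    have vc: "v t = v a" if "t \<in> {a..m}" for t
    proof (rule zero_const[OF _ that])
      fix s assume s: "s \<in> {a..m}"
      have "(v has_real_derivative (\<beta> s * v s * (-1 + u s))) (at s within {a..m})"
        by (rule has_field_derivative_subset[OF ode_v[rule_format] sub1]) (use s sub1 in auto)
      then show "(v has_real_derivative 0) (at s within {a..m})" using bz[OF s] by simp
    qed
    have uc: "u t = u m" if "t \<in> {m..b}" for t
    proof (rule zero_const[OF _ that])
      fix s assume s: "s \<in> {m..b}"
      have "(u has_real_derivative (\<alpha> s * u s * (1 - v s))) (at s within {m..b})"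
        by (rule has_field_derivative_subset[OF ode_u[rule_format] sub2]) (use s sub2 in auto)
      then show "(u has_real_derivative 0) (at s within {m..b})" using az[OF s] by simp
    qed
    have shA: "integral {a..m} \<alpha> = A"
    proof -
      have "integral {0..T/2} (\<alpha> \<circ> (+) a) = integral {0+a..T/2+a} \<alpha>" by (rule integral_shift_Icc_real)
      moreover have "\<alpha> \<circ> (+) a = \<alpha>"
      proof
        fix y show "(\<alpha> \<circ> (+) a) y = \<alpha> y" using perA[of y k] by (simp add: a_def add.commute)
      qed
      ultimately show ?thesis using iA1 by (simp add: m_def add.commute)
    qed
    have shB: "integral {m..b} \<beta> = A"
    proof -
      have "integral {T/2..T} (\<beta> \<circ> (+) a) = integral {T/2+a..T+a} \<beta>" by (rule integral_shift_Icc_real)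
      moreover have "\<beta> \<circ> (+) a = \<beta>"
      proof
        fix y show "(\<beta> \<circ> (+) a) y = \<beta> y" using perB[of y k] by (simp add: a_def add.commute)
      qed
      ultimately show ?thesis using iB2 by (simp add: m_def b_def add.commute)
    qed
    have um: "u m = u a * exp ((1 - v a) * integral {a..m} \<alpha>)"
    proof (rule expsol[OF am])
      show "continuous_on {a..m} \<alpha>" using cont_a by (rule continuous_on_subset) auto
      fix t assume t: "t \<in> {a..m}"
      have "(u has_real_derivative (\<alpha> t * u t * (1 - v t))) (at t within {a..m})"
        by (rule has_field_derivative_subset[OF ode_u[rule_format] sub1]) (use t sub1 in auto)
      then show "(u has_real_derivative (\<alpha> t * u t * (1 - v a))) (at t within {a..m})"
        using vc[OF t] by simp
    qed
    have vb: "v b = v m * exp ((-1 + u m) * integral {m..b} \<beta>)"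
    proof (rule expsol[OF mb])
      show "continuous_on {m..b} \<beta>" using cont_b by (rule continuous_on_subset) auto
      fix t assume t: "t \<in> {m..b}"
      have "(v has_real_derivative (\<beta> t * v t * (-1 + u t))) (at t within {m..b})"
        by (rule has_field_derivative_subset[OF ode_v[rule_format] sub2]) (use t sub2 in auto)
      then show "(v has_real_derivative (\<beta> t * v t * (-1 + u m))) (at t within {m..b})"
        using uc[OF t] by simp
    qed
    have "u b = u m" using mb by (intro uc) auto
    moreover have "v m = v a" using am by (intro vc) auto
    ultimately show ?thesis using um vb shA shB bb by (simp add: a_def)
  qed
  define U where "U k = u (real k * T)" for k
  define V where "V k = v (real k * T)" for k
  have stU: "U (Suc k) = U k * exp ((1 - V k) * A)" and stV: "V (Suc k) = V k * exp ((-1 + U (Suc k)) * A)" for k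
    using step[of k] by (auto simp: U_def V_def)
  have prodU: "U j = U 0 * exp (A * (real j - (\<Sum>k<j. V k)))" for j
  proof (induction j)
    case (Suc j) then show ?case by (simp add: stU mult_exp_exp algebra_simps)
  qed simp
  have prodV: "V j = V 0 * exp (A * ((\<Sum>k<j. U (Suc k)) - real j))" for j
  proof (induction j)
    case (Suc j) then show ?case by (simp add: stV mult_exp_exp algebra_simps)
  qed simp
  have U0: "U 0 = x" and V0: "V 0 = x" using init by (auto simp: U_def V_def)
  have Un: "U n = x" using prodU[of n] sum_v U0 by (simp add: V_def)
  have "(\<Sum>k<n. U (Suc k)) = (\<Sum>k<Suc n. U k) - U 0"
    by (subst sum.lessThan_Suc_shift) simp
  also have "\<dots> = real n" using sum_u Un U0 by (simp add: U_def)
  finally have Vn: "V n = x" using prodV[of n] V0 by simp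
  have rev: "h \<le> n \<Longrightarrow> U (n - h) = V h \<and> V (n - h) = U h" for h
  proof (induction h)
    case 0 then show ?case using Un Vn U0 V0 by simp
  next
    case (Suc h)
    define m where "m = n - Suc h"
    have mS: "Suc m = n - h" using Suc.prems by (simp add: m_def)
    have IH1: "U (Suc m) = V h" and IH2: "V (Suc m) = U h" using Suc mS by auto
    have e1: "V m = U (Suc h)"
    proof -
      have "U h = V m * exp ((-1 + V h) * A)" using IH2 stV[of m] IH1 by simp
      then have "U h * exp ((1 - V h) * A) = V m * (exp ((-1 + V h) * A) * exp ((1 - V h) * A))" by simp
      also have "exp ((-1 + V h) * A) * exp ((1 - V h) * A) = 1" by (simp add: mult_exp_exp algebra_simps)
      finally show ?thesis using stU[of h] by simp
    qed
    have e2: "U m = V (Suc h)"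
    proof -
      have "V h = U m * exp ((1 - V m) * A)" using IH1 stU[of m] by simp
      then have "V h * exp ((-1 + V m) * A) = U m * (exp ((1 - V m) * A) * exp ((-1 + V m) * A))" by simp
      also have "exp ((1 - V m) * A) * exp ((-1 + V m) * A) = 1" by (simp add: mult_exp_exp algebra_simps)
      finally show ?thesis using stV[of h] e1 by simp
    qed
    show ?case using e1 e2 by (simp add: m_def)
  qed
  show ?thesis
  proof
    fix h assume "h \<in> {1..n-1}"
    then have "h \<le> n" by auto
    then show "u (real h * T) = v (real (n - h) * T)" using rev[of h] by (simp add: U_def V_def)
  qed
qed

end
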